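(* Let $V$ be an $n$-dimensional real affine space provided with a $C^2$ Finsler metric $F$. Then $(V,F)$ is a Minkowski-Randers space if and only if for some integer $k$ with $2\le k\le n-1$ the set of $k$-dimensional affine subspaces of $V$ which, with the metric induced by $F$, are Minkowski-Randers spaces is dense in the affine Grassmannian ${\rm Graff}_k(V)$ of $k$-dimensional affine subspaces of $V$.
   Context: A Minkowski norm is a nonnegative function on a vector space, $C^2$ outside the origin, vanishing only at $\mathbf{0}$, positively homogeneous of degree one, satisfying the triangle inequality, with positive definite Hessian of its square outside the origin. A $C^2$ Finsler metric on $V$ is a continuous $F:TV\to[0,\infty)$, $C^2$ outside the zero section, restricting to a Minkowski norm on each tangent space. A Minkowski-Randers space is an affine space with a $C^2$ Finsler metric that is the sum of a translation-invariant Finsler metric and a $1$-form. The induced metric on an affine subspace is the restriction of $F$ to its tangent bundle. *)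

theory Defs
  imports "HOL-Analysis.Analysis"
begin

definition C2_with :: "'b::real_normed_vector set \<Rightarrow> ('b \<Rightarrow> real)
    \<Rightarrow> ('b \<Rightarrow> ('b \<Rightarrow>\<^sub>L real)) \<Rightarrow> ('b \<Rightarrow> ('b \<Rightarrow>\<^sub>L ('b \<Rightarrow>\<^sub>L real))) \<Rightarrow> bool" where
  "C2_with S f f' f'' \<longleftrightarrow>
     (\<forall>x\<in>S. (f has_derivative blinfun_apply (f' x)) (at x within S)) \<and>
     (\<forall>x\<in>S. (f' has_derivative blinfun_apply (f'' x)) (at x within S)) \<and>
     continuous_on S f''"

definition C2_on :: "'b::real_normed_vector set \<Rightarrow> ('b \<Rightarrow> real) \<Rightarrow> bool" where
  "C2_on S f \<longleftrightarrow> (\<exists>f' f''. C2_with S f f' f'')"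

definition minkowski_norm :: "'a::euclidean_space set \<Rightarrow> ('a \<Rightarrow> real) \<Rightarrow> bool" where
  "minkowski_norm L N \<longleftrightarrow>
     (\<forall>v\<in>L. N v \<ge> 0) \<and>
     (\<forall>v\<in>L. N v = 0 \<longleftrightarrow> v = 0) \<and>
     (\<forall>v\<in>L. \<forall>t>0. N (t *\<^sub>R v) = t * N v) \<and>
     (\<forall>u\<in>L. \<forall>v\<in>L. N (u + v) \<le> N u + N v) \<and>
     C2_on (L - {0}) N \<and>
     (\<exists>g' g''. C2_with (L - {0}) (\<lambda>v. (N v)\<^sup>2) g' g'' \<and>
        (\<forall>v\<in>L - {0}. \<forall>w\<in>L - {0}. blinfun_apply (blinfun_apply (g'' v) w) w > 0))"

definition direction :: "'a::real_vector set \<Rightarrow> 'a set" where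
  "direction A = {x - y | x y. x \<in> A \<and> y \<in> A}"

text \<open>C^2 Finsler metric on the affine subspace A: F x v is the length of the
 tangent vector v \<in> direction A at the point x \<in> A.\<close>
definition finsler_on :: "'a::euclidean_space set \<Rightarrow> ('a \<Rightarrow> 'a \<Rightarrow> real) \<Rightarrow> bool" where
  "finsler_on A F \<longleftrightarrow>
     continuous_on (A \<times> direction A) (\<lambda>(x, v). F x v) \<and>
     C2_on (A \<times> (direction A - {0})) (\<lambda>(x, v). F x v) \<and>
     (\<forall>x\<in>A. minkowski_norm (direction A) (F x))"

definition minkowski_randers :: "'a::euclidean_space set \<Rightarrow> ('a \<Rightarrow> 'a \<Rightarrow> real) \<Rightarrow> bool" where
  "minkowski_randers A F \<longleftrightarrow>
     finsler_on A F \<and>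
     (\<exists>N \<beta>. finsler_on A (\<lambda>_ v. N v) \<and>
        (\<forall>x\<in>A. \<forall>u\<in>direction A. \<forall>v\<in>direction A. \<forall>a b.
            \<beta> x (a *\<^sub>R u + b *\<^sub>R v) = a * \<beta> x u + b * \<beta> x v) \<and>
        (\<forall>x\<in>A. \<forall>v\<in>direction A. F x v = N v + \<beta> x v))"

definition graff :: "nat \<Rightarrow> 'a::euclidean_space set set" where
  "graff k = {A. affine A \<and> aff_dim A = int k}"

text \<open>Closeness in the affine Grassmannian: Graff_k embedded via
 A \<mapsto> (orthogonal projection onto direction A, foot point of A nearest to 0).\<close>
definition graff_near :: "'a::euclidean_space set \<Rightarrow> 'a set \<Rightarrow> real \<Rightarrow> bool" where
  "graff_near A B e \<longleftrightarrow>
     (\<forall>x. norm x \<le> 1 \<longrightarrow>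
        norm (closest_point (direction A) x - closest_point (direction B) x) < e) \<and>
     norm (closest_point A 0 - closest_point B 0) < e"

definition graff_dense :: "nat \<Rightarrow> 'a::euclidean_space set set \<Rightarrow> bool" where
  "graff_dense k D \<longleftrightarrow> D \<subseteq> graff k \<and>
     (\<forall>A\<in>graff k. \<forall>e>0. \<exists>B\<in>D. graff_near A B e)"

end

theory Submission
  imports Defs
begin

lemma direction_UNIV: "direction UNIV = UNIV"
  unfolding direction_def by (auto, metis diff_zero)

lemma alg_linear:
  fixes B :: "'a::real_vector \<Rightarrow> 'a \<Rightarrow> real"
  assumes add1: "\<And>d1 d2 w. B (d1 + d2) w = B d1 w + B d2 w"
    and hom1: "\<And>c d w. B (c *\<^sub>R d) w = c * B d w"
    and P: "\<And>d u a b. B d (a *\<^sub>R d + b *\<^sub>R u) = a * B d d + b * B d u"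
  shows "B d (x + y) = B d x + B d y" "B d (c *\<^sub>R x) = c * B d x"
proof -
  have hom: "B d (c *\<^sub>R x) = c * B d x" for d c x using P[of d 0 c x] by simp
  then show "B d (c *\<^sub>R x) = c * B d x" .
  have B0: "B d 0 = 0" for d using hom[of d 0 0] by simp
  have lin1_0: "B 0 w = 0" for w using add1[of 0 0 w] by simp
  have neg1: "B (- d) w = - B d w" for d w using add1[of d "-d" w] lin1_0 by simp
  have diff1: "B (d1 - d2) w = B d1 w - B d2 w" for d1 d2 w
    using add1[of d1 "-d2" w] neg1 by simp
  define D where "D d x y = B d (x + y) - B d x - B d y" for d x y
  have Dadd1: "D (d1 + d2) x y = D d1 x y + D d2 x y" for d1 d2 x y
    unfolding D_def add1 by simp
  have Ddiff1: "D (d1 - d2) x y = D d1 x y - D d2 x y" for d1 d2 x y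
    unfolding D_def diff1 by simp
  have Dsym: "D d x y = D d y x" for d x y unfolding D_def by (simp add: add.commute)
  have Dself: "D x x y = 0" for x y
    using P[of x 1 1 y] unfolding D_def by simp
  have Dinv: "D d (x + d) y = D d x y" for d x y
  proof -
    have "B d (x + d + y) = B d (x + y) + B d d"
      using P[of d 1 1 "x + y"] by (simp add: algebra_simps)
    moreover have "B d (x + d) = B d x + B d d"
      using P[of d 1 1 x] by (simp add: algebra_simps)
    ultimately show ?thesis unfolding D_def by simp
  qed
  have antis: "D x x' y = - D x' x y" for x x' y
  proof -
    have "D (x' - x) x' y = D (x' - x) x y"
      using Dinv[of "x' - x" x y] by simp
    then show ?thesis using Ddiff1 Dself by (simp add: algebra_simps)
  qed
  have Dlin2: "D d (x1 + x2) y = D d x1 y + D d x2 y" for d x1 x2 y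
    using antis[of d "x1 + x2" y] antis[of d x1 y] antis[of d x2 y] Dadd1[of x1 x2 d y]
    by (metis antis minus_add_distrib)
  have Dhom2: "D d (c *\<^sub>R x) y = c * D d x y" for d c x y
  proof -
    have "D (c *\<^sub>R x) d y = c * D x d y"
      unfolding D_def using hom1 by (simp add: algebra_simps)
    then show ?thesis using antis by (metis mult_minus_right)
  qed
  have "D d (2 *\<^sub>R x) (2 *\<^sub>R y) = 4 * D d x y"
    using Dhom2 Dsym by (metis mult.assoc num_double numeral_times_numeral)
  moreover have "D d (2 *\<^sub>R x) (2 *\<^sub>R y) = 2 * D d x y"
    unfolding D_def using hom by (simp add: scaleR_add_right[symmetric])
  ultimately have "D d x y = 0" by simp
  then show "B d (x + y) = B d x + B d y" unfolding D_def by simp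
qed

lemma deriv_part:
  fixes F :: "'a::euclidean_space \<Rightarrow> 'a \<Rightarrow> real"
  assumes fin: "finsler_on UNIV F"
    and PL: "\<And>x d u t a b. F (x + t *\<^sub>R d) (a *\<^sub>R d + b *\<^sub>R u) - F x (a *\<^sub>R d + b *\<^sub>R u)
        = a * (F (x + t *\<^sub>R d) d - F x d) + b * (F (x + t *\<^sub>R d) u - F x u)"
  shows "F y (a *\<^sub>R u + b *\<^sub>R w) - F 0 (a *\<^sub>R u + b *\<^sub>R w)
        = a * (F y u - F 0 u) + b * (F y w - F 0 w)"
proof -
  let ?S = "(UNIV::'a set) \<times> (UNIV - {0::'a})"
  obtain f' f'' where c2: "C2_with ?S (\<lambda>(x, v). F x v) f' f''"
    using fin unfolding finsler_on_def C2_on_def direction_UNIV by auto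
  have opS: "open ?S" by (intro open_Times open_UNIV open_delete)
  have fd: "((\<lambda>(x, v). F x v) has_derivative blinfun_apply (f' p)) (at p)" if "p \<in> ?S" for p
    using c2 that opS unfolding C2_with_def by (metis at_within_open)
  have F0: "F x 0 = 0" for x
    using fin unfolding finsler_on_def minkowski_norm_def direction_UNIV by auto
  define Bx where "Bx x d w = (if w = 0 then 0 else blinfun_apply (f' (x, w)) (d, 0))" for x d w
  have deriv: "DERIV (\<lambda>s. F (x + s *\<^sub>R d) w) t :> Bx (x + t *\<^sub>R d) d w" for x d w t
  proof (cases "w = 0")
    case True
    then show ?thesis unfolding Bx_def by (simp add: F0)
  next
    case False
    have g: "((\<lambda>s. (x + s *\<^sub>R d, w)) has_derivative (\<lambda>h. (h *\<^sub>R d, 0))) (at t)"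
      by (auto intro!: derivative_eq_intros)
    have h: "((\<lambda>(x, v). F x v) has_derivative blinfun_apply (f' (x + t *\<^sub>R d, w))) (at ((\<lambda>s. (x + s *\<^sub>R d, w)) t))"
      using fd False by auto
    have "(((\<lambda>(x, v). F x v) \<circ> (\<lambda>s. (x + s *\<^sub>R d, w))) has_derivative
        (blinfun_apply (f' (x + t *\<^sub>R d, w)) \<circ> (\<lambda>h. (h *\<^sub>R d, 0)))) (at t)"
      by (rule diff_chain_at[OF g h])
    moreover have "(blinfun_apply (f' (x + t *\<^sub>R d, w)) \<circ> (\<lambda>h. (h *\<^sub>R d, 0)))
        = (*) (Bx (x + t *\<^sub>R d) d w)"
    proof
      fix h :: real
      have "blinfun_apply (f' (x + t *\<^sub>R d, w)) (h *\<^sub>R d, 0) = blinfun_apply (f' (x + t *\<^sub>R d, w)) (h *\<^sub>R (d, 0))"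
        by simp
      also have "\<dots> = h * blinfun_apply (f' (x + t *\<^sub>R d, w)) (d, 0)"
        by (subst blinfun.scaleR_right) simp
      finally show "(blinfun_apply (f' (x + t *\<^sub>R d, w)) \<circ> (\<lambda>h. (h *\<^sub>R d, 0))) h = Bx (x + t *\<^sub>R d) d w * h"
        unfolding Bx_def comp_def using False by simp
    qed
    ultimately show ?thesis unfolding has_field_derivative_def comp_def by simp
  qed
  have quot: "((\<lambda>h. (F (x + h *\<^sub>R d) w - F x w) / h) \<longlongrightarrow> Bx x d w) (at 0)" for x d w
    using deriv[of x d w 0] unfolding DERIV_def by simp
  have P: "Bx x d (a *\<^sub>R d + b *\<^sub>R u) = a * Bx x d d + b * Bx x d u" for x d u a b
  proof -
    have l1: "((\<lambda>h. (F (x + h *\<^sub>R d) (a *\<^sub>R d + b *\<^sub>R u) - F x (a *\<^sub>R d + b *\<^sub>R u)) / h)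
        \<longlongrightarrow> Bx x d (a *\<^sub>R d + b *\<^sub>R u)) (at 0)" by (rule quot)
    have l2: "((\<lambda>h. a * ((F (x + h *\<^sub>R d) d - F x d) / h) + b * ((F (x + h *\<^sub>R d) u - F x u) / h))
        \<longlongrightarrow> a * Bx x d d + b * Bx x d u) (at 0)"
      by (intro tendsto_intros quot)
    have e: "(F (x + h *\<^sub>R d) (a *\<^sub>R d + b *\<^sub>R u) - F x (a *\<^sub>R d + b *\<^sub>R u)) / h
        = a * ((F (x + h *\<^sub>R d) d - F x d) / h) + b * ((F (x + h *\<^sub>R d) u - F x u) / h)" for h
      by (subst PL[of x h d a b u]) (simp only: add_divide_distrib times_divide_eq_right)
    have l1': "((\<lambda>h. a * ((F (x + h *\<^sub>R d) d - F x d) / h) + b * ((F (x + h *\<^sub>R d) u - F x u) / h))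
        \<longlongrightarrow> Bx x d (a *\<^sub>R d + b *\<^sub>R u)) (at 0)"
      using l1 unfolding e .
    show ?thesis by (rule tendsto_unique[OF trivial_limit_at l1' l2])
  qed
  have add1: "Bx x (d1 + d2) w = Bx x d1 w + Bx x d2 w" for x d1 d2 w
  proof -
    have "blinfun_apply (f' (x, w)) (d1 + d2, 0) = blinfun_apply (f' (x, w)) ((d1, 0) + (d2, 0))"
      by simp
    also have "\<dots> = blinfun_apply (f' (x, w)) (d1, 0) + blinfun_apply (f' (x, w)) (d2, 0)"
      by (rule blinfun.add_right)
    finally show ?thesis unfolding Bx_def by simp
  qed
  have hom1: "Bx x (c *\<^sub>R d) w = c * Bx x d w" for x c d w
  proof -
    have "blinfun_apply (f' (x, w)) (c *\<^sub>R d, 0) = blinfun_apply (f' (x, w)) (c *\<^sub>R (d, 0))"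
      by simp
    also have "\<dots> = c * blinfun_apply (f' (x, w)) (d, 0)"
      by (subst blinfun.scaleR_right) simp
    finally show ?thesis unfolding Bx_def by simp
  qed
  have linB: "Bx x d (a *\<^sub>R u + b *\<^sub>R w) = a * Bx x d u + b * Bx x d w" for x d
    using alg_linear[of "Bx x", OF add1 hom1 P] by simp
  define h where "h s = F (0 + s *\<^sub>R y) (a *\<^sub>R u + b *\<^sub>R w) - a * F (0 + s *\<^sub>R y) u - b * F (0 + s *\<^sub>R y) w" for s
  have "DERIV h s :> 0" for s
  proof -
    have "DERIV h s :> Bx (0 + s *\<^sub>R y) y (a *\<^sub>R u + b *\<^sub>R w) - a * Bx (0 + s *\<^sub>R y) y u - b * Bx (0 + s *\<^sub>R y) y w"
      unfolding h_def by (intro derivative_intros DERIV_cmult deriv)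
    then show ?thesis using linB by simp
  qed
  then have "h 1 = h 0" using DERIV_isconst_all by blast
  then show ?thesis unfolding h_def by (simp add: algebra_simps)
qed

lemma exists_subspace_containing:
  fixes d u :: "'a::euclidean_space"
  assumes "2 \<le> k" "k \<le> DIM('a)"
  shows "\<exists>T. subspace T \<and> d \<in> T \<and> u \<in> T \<and> dim T = k"
proof -
  obtain I where I: "I \<subseteq> {d, u}" "independent I" "{d, u} \<subseteq> span I"
    by (rule maximal_independent_subset)
  obtain B where B: "I \<subseteq> B" "independent B" "UNIV \<subseteq> span B"
    by (rule maximal_independent_subset_extend[of I UNIV]) (use I(2) in auto)
  have finB: "finite B" using B(2) by (rule finiteI_independent)
  have "dim (span B) = card B" using B(2) by (rule dim_span_eq_card_independent)
  moreover have "span B = UNIV" using B(3) by auto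
  ultimately have cB: "card B = DIM('a)" by simp
  have "card I \<le> card {d, u}" using I(1) by (rule card_mono[rotated]) simp
  also have "\<dots> \<le> 2" by (simp add: card_insert_le_m1)
  finally have cI: "card I \<le> k" using assms(1) by simp
  obtain C where C: "I \<subseteq> C" "C \<subseteq> B" "card C = k"
    using exists_subset_between[OF cI _ B(1) finB] assms(2) cB by auto
  have indC: "independent C" using B(2) C(2) independent_mono by blast
  show ?thesis
  proof (intro exI conjI)
    show "subspace (span C)" by simp
    show "d \<in> span C" "u \<in> span C" using I(3) span_mono[OF C(1)] by auto
    show "dim (span C) = k" using dim_span_eq_card_independent[OF indC] C(3) by simp
  qed
qed

lemma direction_translation_subspace:
  fixes T :: "'a::euclidean_space set"
  assumes "subspace T"
  shows "direction ((+) x ` T) = T"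
proof
  show "direction ((+) x ` T) \<subseteq> T"
    unfolding direction_def using assms by (auto simp: subspace_diff)
  show "T \<subseteq> direction ((+) x ` T)"
  proof
    fix z assume "z \<in> T"
    then have "z = (x + z) - (x + 0) \<and> x + z \<in> (+) x ` T \<and> x + 0 \<in> (+) x ` T"
      using assms subspace_0[OF assms] by (auto intro: image_eqI[of _ _ 0])
    then show "z \<in> direction ((+) x ` T)" unfolding direction_def by blast
  qed
qed

definition PLA :: "('a::euclidean_space \<Rightarrow> 'a \<Rightarrow> real) \<Rightarrow> 'a set \<Rightarrow> bool" where
  "PLA F A \<longleftrightarrow> (\<forall>x\<in>A. \<forall>y\<in>A. \<forall>w1\<in>direction A. \<forall>w2\<in>direction A. \<forall>a b.
     F y (a *\<^sub>R w1 + b *\<^sub>R w2) - F x (a *\<^sub>R w1 + b *\<^sub>R w2)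
       = a * (F y w1 - F x w1) + b * (F y w2 - F x w2))"

lemma PL_from_planes:
  fixes F :: "'a::euclidean_space \<Rightarrow> 'a \<Rightarrow> real"
  assumes "2 \<le> k" "k \<le> DIM('a)" "\<forall>A\<in>graff k. PLA F A"
  shows "F (x + t *\<^sub>R d) (a *\<^sub>R d + b *\<^sub>R u) - F x (a *\<^sub>R d + b *\<^sub>R u)
        = a * (F (x + t *\<^sub>R d) d - F x d) + b * (F (x + t *\<^sub>R d) u - F x u)"
proof -
  obtain T where T: "subspace T" "d \<in> T" "u \<in> T" "dim T = k"
    using exists_subspace_containing[OF assms(1,2)] by blast
  let ?A = "(+) x ` T"
  have "?A \<in> graff k"
    unfolding graff_def using T affine_translation[of T x] subspace_imp_affine[of T]
    by (simp add: aff_dim_translation_eq aff_dim_subspace)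
  then have P: "PLA F ?A" using assms(3) by blast
  have dA: "direction ?A = T" using T(1) by (rule direction_translation_subspace)
  have "x \<in> ?A" using T(1) subspace_0 by (metis add_0_right image_eqI)
  moreover have "x + t *\<^sub>R d \<in> ?A" using T by (simp add: subspace_scale)
  ultimately show ?thesis using P T dA unfolding PLA_def by metis
qed

lemma direction_eq_image:
  fixes A :: "'a::euclidean_space set"
  assumes "affine A" "a0 \<in> A"
  shows "direction A = (\<lambda>x. x - a0) ` A"
proof
  show "(\<lambda>x. x - a0) ` A \<subseteq> direction A" unfolding direction_def using assms by blast
  show "direction A \<subseteq> (\<lambda>x. x - a0) ` A"
  proof
    fix z assume "z \<in> direction A"
    then obtain p q where pq: "z = p - q" "p \<in> A" "q \<in> A" unfolding direction_def by blast
    have "a0 + 1 *\<^sub>R (p - q) \<in> A" by (rule mem_affine_3_minus) (use assms pq in auto)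
    then show "z \<in> (\<lambda>x. x - a0) ` A" using pq by (auto intro!: image_eqI[of _ _ "a0 + (p - q)"])
  qed
qed

lemma direction_subspace:
  fixes A :: "'a::euclidean_space set"
  assumes "affine A" "A \<noteq> {}"
  shows "subspace (direction A)"
proof -
  obtain a0 where a0: "a0 \<in> A" using assms by blast
  have "subspace ((\<lambda>x. x - a0) ` A)" by (rule affine_diffs_subspace_subtract[OF assms(1) a0])
  then show ?thesis using direction_eq_image[OF assms(1) a0] by simp
qed

lemma add_direction:
  fixes A :: "'a::euclidean_space set"
  assumes "affine A" "b \<in> A" "z \<in> direction A"
  shows "b + z \<in> A"
proof -
  obtain p q where pq: "z = p - q" "p \<in> A" "q \<in> A" using assms(3) unfolding direction_def by blast
  have "b + 1 *\<^sub>R (p - q) \<in> A" by (rule mem_affine_3_minus) (use assms pq in auto)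
  then show ?thesis using pq by simp
qed

lemma MR_PLA:
  fixes A :: "'a::euclidean_space set"
  assumes "affine A" "A \<noteq> {}" "minkowski_randers A F"
  shows "PLA F A"
proof -
  obtain N \<beta> where
        lin: "\<forall>x\<in>A. \<forall>u\<in>direction A. \<forall>v\<in>direction A. \<forall>a b.
            \<beta> x (a *\<^sub>R u + b *\<^sub>R v) = a * \<beta> x u + b * \<beta> x v"
    and eq: "\<forall>x\<in>A. \<forall>v\<in>direction A. F x v = N v + \<beta> x v"
    using assms(3) unfolding minkowski_randers_def by blast
  have sub: "subspace (direction A)" using assms(1,2) by (rule direction_subspace)
  show ?thesis unfolding PLA_def
  proof (intro ballI allI)
    fix x y w1 w2 a b
    assume h: "x \<in> A" "y \<in> A" "w1 \<in> direction A" "w2 \<in> direction A"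
    have c: "a *\<^sub>R w1 + b *\<^sub>R w2 \<in> direction A"
      using sub h by (simp add: subspace_add subspace_scale)
    show "F y (a *\<^sub>R w1 + b *\<^sub>R w2) - F x (a *\<^sub>R w1 + b *\<^sub>R w2) =
          a * (F y w1 - F x w1) + b * (F y w2 - F x w2)"
    proof -
      have e1: "F y (a *\<^sub>R w1 + b *\<^sub>R w2) = N (a *\<^sub>R w1 + b *\<^sub>R w2) + \<beta> y (a *\<^sub>R w1 + b *\<^sub>R w2)"
        by (rule eq[rule_format, OF h(2) c])
      have e2: "F x (a *\<^sub>R w1 + b *\<^sub>R w2) = N (a *\<^sub>R w1 + b *\<^sub>R w2) + \<beta> x (a *\<^sub>R w1 + b *\<^sub>R w2)"
        by (rule eq[rule_format, OF h(1) c])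
      have e3: "F y w1 = N w1 + \<beta> y w1" "F x w1 = N w1 + \<beta> x w1"
         "F y w2 = N w2 + \<beta> y w2" "F x w2 = N w2 + \<beta> x w2"
        by (rule eq[rule_format, OF h(2) h(3)] eq[rule_format, OF h(1) h(3)]
             eq[rule_format, OF h(2) h(4)] eq[rule_format, OF h(1) h(4)])+
      have l: "\<beta> y (a *\<^sub>R w1 + b *\<^sub>R w2) = a * \<beta> y w1 + b * \<beta> y w2"
         "\<beta> x (a *\<^sub>R w1 + b *\<^sub>R w2) = a * \<beta> x w1 + b * \<beta> x w2"
        by (rule lin[rule_format, OF h(2) h(3) h(4)] lin[rule_format, OF h(1) h(3) h(4)])+
      show ?thesis unfolding e1 e2 e3 l by (simp add: algebra_simps)
    qed
  qed
qed

lemma seq_bound_lim: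
  fixes X :: "nat \<Rightarrow> 'a::real_normed_vector"
  assumes "\<And>n. norm (X n - L) \<le> C * inverse (real (Suc n))"
  shows "X \<longlonglongrightarrow> L"
proof -
  have g: "(\<lambda>n. C * inverse (real (Suc n))) \<longlonglongrightarrow> C * 0"
    by (rule tendsto_mult[OF tendsto_const LIMSEQ_inverse_real_of_nat])
  have e: "eventually (\<lambda>n. norm (X n - L) \<le> C * inverse (real (Suc n))) sequentially"
    using assms by (rule always_eventually[OF allI])
  have "(\<lambda>n. X n - L) \<longlonglongrightarrow> 0"
    by (rule Lim_null_comparison[OF e]) (use g in simp)
  then show ?thesis by (rule LIM_zero_cancel)
qed

lemma F_lim:
  fixes F :: "'a::euclidean_space \<Rightarrow> 'a \<Rightarrow> real"
  assumes "continuous_on UNIV (\<lambda>(x, v). F x v)" "X \<longlonglongrightarrow> x" "W \<longlonglongrightarrow> w"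
  shows "(\<lambda>n. F (X n) (W n)) \<longlonglongrightarrow> F x w"
proof -
  have "isCont (\<lambda>(x, v). F x v) (x, w)"
    using assms(1) continuous_on_eq_continuous_at[OF open_UNIV] by blast
  from isCont_tendsto_compose[OF this tendsto_Pair[OF assms(2,3)]]
  show ?thesis by (simp only: prod.case)
qed

lemma graff_ne:
  fixes A :: "'a::euclidean_space set"
  assumes "A \<in> graff k"
  shows "affine A" "A \<noteq> {}"
  using assms unfolding graff_def by auto

lemma dense_PLA:
  fixes F :: "'a::euclidean_space \<Rightarrow> 'a \<Rightarrow> real"
  assumes cont: "continuous_on UNIV (\<lambda>(x, v). F x v)"
    and dense: "graff_dense k {A \<in> graff k. minkowski_randers A F}"
    and A: "A \<in> graff k"
  shows "PLA F A"
  unfolding PLA_def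
proof (intro ballI allI)
  fix x y w1 w2 a b
  assume x: "x \<in> A" and y: "y \<in> A" and w1: "w1 \<in> direction A" and w2: "w2 \<in> direction A"
  define e where "e n = inverse (real (Suc n))" for n :: nat
  have epos: "e n > 0" for n unfolding e_def by simp
  have "\<forall>n. \<exists>B. B \<in> graff k \<and> minkowski_randers B F \<and> graff_near A B (e n)"
    using dense A epos unfolding graff_dense_def by blast
  then obtain Bs where Bs: "\<And>n. Bs n \<in> graff k" "\<And>n. minkowski_randers (Bs n) F"
      "\<And>n. graff_near A (Bs n) (e n)"
    by metis
  have affA: "affine A" "A \<noteq> {}" using graff_ne[OF A] by auto
  have affB: "affine (Bs n)" "Bs n \<noteq> {}" for n using graff_ne[OF Bs(1)] by auto
  have PB: "PLA F (Bs n)" for n using MR_PLA[OF affB Bs(2)] .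
  define a0 where "a0 = closest_point A 0"
  define bf where "bf n = closest_point (Bs n) 0" for n
  have a0A: "a0 \<in> A" unfolding a0_def using affA affine_closed closest_point_in_set by blast
  have bB: "bf n \<in> Bs n" for n unfolding bf_def using affB affine_closed closest_point_in_set by blast
  have near1: "norm (closest_point (direction A) z - closest_point (direction (Bs n)) z) < e n"
    if "norm z \<le> 1" for z n using Bs(3)[of n] that unfolding graff_near_def by blast
  have near2: "norm (a0 - bf n) < e n" for n
    using Bs(3)[of n] unfolding graff_near_def a0_def bf_def by blast
  have subA: "subspace (direction A)" using affA by (rule direction_subspace)
  have subB: "subspace (direction (Bs n))" for n using affB by (rule direction_subspace)
  define ap where "ap n z = (norm z + 1) *\<^sub>R closest_point (direction (Bs n)) (z /\<^sub>R (norm z + 1))" for n z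
  have ap_in: "ap n z \<in> direction (Bs n)" for n z
  proof -
    have "closest_point (direction (Bs n)) (z /\<^sub>R (norm z + 1)) \<in> direction (Bs n)"
      using subB[of n] closed_subspace subspace_0 by (intro closest_point_in_set) blast+
    then show ?thesis unfolding ap_def using subB[of n] by (simp add: subspace_scale)
  qed
  have ap_close: "norm (ap n z - z) \<le> (norm z + 1) * e n" if z: "z \<in> direction A" for n z
  proof -
    define c where "c = norm z + 1"
    have cpos: "c > 0" unfolding c_def by (simp add: add_nonneg_pos)
    define z' where "z' = z /\<^sub>R c"
    have nz: "norm z' \<le> 1"
    proof -
      have "norm z' = norm z / c" unfolding z'_def using cpos by (simp add: divide_inverse_commute)
      also have "\<dots> \<le> 1" using cpos unfolding c_def by (simp add: divide_le_eq_1)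
      finally show ?thesis .
    qed
    have zA: "z' \<in> direction A" unfolding z'_def using subA z by (simp add: subspace_scale)
    have "closest_point (direction A) z' = z'" using zA by (rule closest_point_self)
    then have n1: "norm (z' - closest_point (direction (Bs n)) z') < e n" using near1[OF nz, of n] by simp
    have "ap n z - z = c *\<^sub>R (closest_point (direction (Bs n)) z' - z')"
      unfolding ap_def z'_def c_def[symmetric] using cpos by (simp add: algebra_simps)
    then have "norm (ap n z - z) = c * norm (z' - closest_point (direction (Bs n)) z')"
      using cpos by (simp add: norm_minus_commute)
    also have "\<dots> \<le> c * e n" using n1 cpos by simp
    finally show ?thesis unfolding c_def .
  qed
  define pt where "pt n p = bf n + ap n (p - a0)" for n p
  have pt_in: "pt n p \<in> Bs n" for n p
    unfolding pt_def using add_direction[OF affB(1) bB ap_in] .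
  have pt_close: "norm (pt n p - p) \<le> (norm (p - a0) + 2) * e n" if p: "p \<in> A" for n p
  proof -
    have pd: "p - a0 \<in> direction A" unfolding direction_def using p a0A by blast
    have "pt n p - p = (bf n - a0) + (ap n (p - a0) - (p - a0))" unfolding pt_def by simp
    then have "norm (pt n p - p) \<le> norm (bf n - a0) + norm (ap n (p - a0) - (p - a0))"
      by (metis norm_triangle_ineq)
    also have "\<dots> \<le> e n + (norm (p - a0) + 1) * e n"
      using near2[of n] ap_close[OF pd, of n] by (simp add: norm_minus_commute)
    finally show ?thesis by (simp add: algebra_simps)
  qed
  have lx: "(\<lambda>n. pt n x) \<longlonglongrightarrow> x" using pt_close[OF x] unfolding e_def by (rule seq_bound_lim)
  have ly: "(\<lambda>n. pt n y) \<longlonglongrightarrow> y" using pt_close[OF y] unfolding e_def by (rule seq_bound_lim)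
  have l1: "(\<lambda>n. ap n w1) \<longlonglongrightarrow> w1" using ap_close[OF w1] unfolding e_def by (rule seq_bound_lim)
  have l2: "(\<lambda>n. ap n w2) \<longlonglongrightarrow> w2" using ap_close[OF w2] unfolding e_def by (rule seq_bound_lim)
  have lc: "(\<lambda>n. a *\<^sub>R ap n w1 + b *\<^sub>R ap n w2) \<longlonglongrightarrow> a *\<^sub>R w1 + b *\<^sub>R w2"
    by (intro tendsto_intros l1 l2)
  have eqn: "F (pt n y) (a *\<^sub>R ap n w1 + b *\<^sub>R ap n w2) - F (pt n x) (a *\<^sub>R ap n w1 + b *\<^sub>R ap n w2)
     = a * (F (pt n y) (ap n w1) - F (pt n x) (ap n w1)) + b * (F (pt n y) (ap n w2) - F (pt n x) (ap n w2))" for n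
    using PB[of n] pt_in ap_in unfolding PLA_def by blast
  have L: "(\<lambda>n. F (pt n y) (a *\<^sub>R ap n w1 + b *\<^sub>R ap n w2) - F (pt n x) (a *\<^sub>R ap n w1 + b *\<^sub>R ap n w2))
      \<longlonglongrightarrow> F y (a *\<^sub>R w1 + b *\<^sub>R w2) - F x (a *\<^sub>R w1 + b *\<^sub>R w2)"
    by (intro tendsto_diff F_lim[OF cont] ly lx lc)
  have R: "(\<lambda>n. a * (F (pt n y) (ap n w1) - F (pt n x) (ap n w1)) + b * (F (pt n y) (ap n w2) - F (pt n x) (ap n w2)))
      \<longlonglongrightarrow> a * (F y w1 - F x w1) + b * (F y w2 - F x w2)"
    by (intro tendsto_add tendsto_mult tendsto_const tendsto_diff F_lim[OF cont] ly lx l1 l2)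
  show "F y (a *\<^sub>R w1 + b *\<^sub>R w2) - F x (a *\<^sub>R w1 + b *\<^sub>R w2) =
        a * (F y w1 - F x w1) + b * (F y w2 - F x w2)"
    using LIMSEQ_unique[OF L] R unfolding eqn by blast
qed

lemma C2_with_linear_compose:
  fixes J :: "'b::real_normed_vector \<Rightarrow>\<^sub>L 'b"
  assumes c2: "C2_with S f f' f''" and JT: "\<And>p. p \<in> T \<Longrightarrow> blinfun_apply J p \<in> S"
    and CR: "\<And>K. blinfun_apply CR K = K o\<^sub>L J"
  shows "C2_with T (\<lambda>p. f (J p)) (\<lambda>p. f' (J p) o\<^sub>L J) (\<lambda>p. CR o\<^sub>L f'' (J p) o\<^sub>L J)"
proof -
  have d1: "(f has_derivative blinfun_apply (f' x)) (at x within S)" if "x \<in> S" for x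
    using c2 that unfolding C2_with_def by blast
  have d2: "(f' has_derivative blinfun_apply (f'' x)) (at x within S)" if "x \<in> S" for x
    using c2 that unfolding C2_with_def by blast
  have c: "continuous_on S f''" using c2 unfolding C2_with_def by blast
  have blJ: "bounded_linear (blinfun_apply J)" by (rule blinfun.bounded_linear_right)
  have dJ: "(blinfun_apply J has_derivative blinfun_apply J) (at p within T)" for p
    using bounded_linear.has_derivative[OF blJ has_derivative_ident] by simp
  have sub: "blinfun_apply J ` T \<subseteq> S" using JT by blast
  have blCR: "bounded_linear (blinfun_apply CR)" by (rule blinfun.bounded_linear_right)
  show ?thesis unfolding C2_with_def
  proof (intro conjI ballI)
    fix p assume p: "p \<in> T"
    have "(f has_derivative blinfun_apply (f' (J p))) (at (J p) within blinfun_apply J ` T)"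
      using has_derivative_subset[OF d1[OF JT[OF p]] sub] .
    from diff_chain_within[OF dJ this]
    have "((\<lambda>p. f (J p)) has_derivative (\<lambda>h. f' (J p) (J h))) (at p within T)"
      by (simp add: comp_def)
    moreover have "(\<lambda>h. f' (J p) (J h)) = blinfun_apply (f' (J p) o\<^sub>L J)" by (rule ext) simp
    ultimately show "((\<lambda>p. f (J p)) has_derivative blinfun_apply (f' (J p) o\<^sub>L J)) (at p within T)"
      by simp
  next
    fix p assume p: "p \<in> T"
    have "(f' has_derivative blinfun_apply (f'' (J p))) (at (J p) within blinfun_apply J ` T)"
      using has_derivative_subset[OF d2[OF JT[OF p]] sub] .
    from diff_chain_within[OF dJ this]
    have "((\<lambda>p. f' (J p)) has_derivative (\<lambda>h. f'' (J p) (J h))) (at p within T)"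
      by (simp add: comp_def)
    from bounded_linear.has_derivative[OF blCR this]
    have "((\<lambda>p. CR (f' (J p))) has_derivative (\<lambda>h. CR (f'' (J p) (J h)))) (at p within T)" .
    moreover have "(\<lambda>p. CR (f' (J p))) = (\<lambda>p. f' (J p) o\<^sub>L J)" using CR by (intro ext) simp
    moreover have "(\<lambda>h. CR (f'' (J p) (J h))) = blinfun_apply (CR o\<^sub>L f'' (J p) o\<^sub>L J)"
      by (rule ext) simp
    ultimately show "((\<lambda>p. f' (J p) o\<^sub>L J) has_derivative blinfun_apply (CR o\<^sub>L f'' (J p) o\<^sub>L J)) (at p within T)"
      by simp
  next
    have cJ: "continuous_on T (\<lambda>p. f'' (J p))"
      by (rule continuous_on_compose2[OF c]) (auto intro: continuous_on_subset[OF bounded_linear.continuous_on[OF blJ continuous_on_id]] simp: sub)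
    have bl2: "bounded_linear (\<lambda>K. CR o\<^sub>L K o\<^sub>L J)"
      by (rule bounded_linear_compose[OF bounded_bilinear.bounded_linear_left[OF bounded_bilinear_blinfun_compose]
            bounded_bilinear.bounded_linear_right[OF bounded_bilinear_blinfun_compose]])
    show "continuous_on T (\<lambda>p. CR o\<^sub>L f'' (J p) o\<^sub>L J)"
      using bounded_linear.continuous_on[OF bl2 cJ] .
  qed
qed

lemma C2_with_mono: "C2_with S f f' f'' \<Longrightarrow> T \<subseteq> S \<Longrightarrow> C2_with T f f' f''"
  unfolding C2_with_def by (meson continuous_on_subset has_derivative_subset subsetD)

lemma C2_on_mono: "C2_on S f \<Longrightarrow> T \<subseteq> S \<Longrightarrow> C2_on T f"
  unfolding C2_on_def using C2_with_mono by blast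

lemma minkowski_norm_mono: "minkowski_norm L N \<Longrightarrow> M \<subseteq> L \<Longrightarrow> minkowski_norm M N"
proof -
  assume mn: "minkowski_norm L N" and hML: "M \<subseteq> L"
  then obtain g' g'' where g: "C2_with (L - {0}) (\<lambda>v. (N v)\<^sup>2) g' g''"
     and pd: "\<forall>v\<in>L - {0}. \<forall>w\<in>L - {0}. blinfun_apply (blinfun_apply (g'' v) w) w > 0"
    unfolding minkowski_norm_def by blast
  have s: "M - {0} \<subseteq> L - {0}" using hML by blast
  show ?thesis
    unfolding minkowski_norm_def
  proof (intro conjI)
    show "\<exists>g' g''. C2_with (M - {0}) (\<lambda>v. (N v)\<^sup>2) g' g'' \<and>
        (\<forall>v\<in>M - {0}. \<forall>w\<in>M - {0}. blinfun_apply (blinfun_apply (g'' v) w) w > 0)"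
      using C2_with_mono[OF g s] pd s by blast
    show "C2_on (M - {0}) N" using mn s C2_on_mono unfolding minkowski_norm_def by blast
  qed (use mn hML in \<open>unfold minkowski_norm_def, blast+\<close>)
qed

lemma direction_mono: "A \<subseteq> B \<Longrightarrow> direction A \<subseteq> direction B"
  unfolding direction_def by blast

lemma finsler_on_mono: "finsler_on B F \<Longrightarrow> A \<subseteq> B \<Longrightarrow> finsler_on A F"
  unfolding finsler_on_def
proof (elim conjE, intro conjI)
  assume "A \<subseteq> B" and c: "continuous_on (B \<times> direction B) (\<lambda>(x, v). F x v)"
    and c2: "C2_on (B \<times> (direction B - {0})) (\<lambda>(x, v). F x v)"
    and m: "\<forall>x\<in>B. minkowski_norm (direction B) (F x)"
  have d: "direction A \<subseteq> direction B" using \<open>A \<subseteq> B\<close> by (rule direction_mono)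
  show "continuous_on (A \<times> direction A) (\<lambda>(x, v). F x v)"
    by (rule continuous_on_subset[OF c]) (use d \<open>A \<subseteq> B\<close> in auto)
  show "C2_on (A \<times> (direction A - {0})) (\<lambda>(x, v). F x v)"
    by (rule C2_on_mono[OF c2]) (use d \<open>A \<subseteq> B\<close> in auto)
  show "\<forall>x\<in>A. minkowski_norm (direction A) (F x)"
    using m d \<open>A \<subseteq> B\<close> minkowski_norm_mono by blast
qed

lemma MR_mono:
  assumes "minkowski_randers B F" "A \<subseteq> B"
  shows "minkowski_randers A F"
proof -
  obtain N \<beta> where fB: "finsler_on B F" and N: "finsler_on B (\<lambda>_ v. N v)"
    and lin: "\<forall>x\<in>B. \<forall>u\<in>direction B. \<forall>v\<in>direction B. \<forall>a b.
            \<beta> x (a *\<^sub>R u + b *\<^sub>R v) = a * \<beta> x u + b * \<beta> x v"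
    and eq: "\<forall>x\<in>B. \<forall>v\<in>direction B. F x v = N v + \<beta> x v"
    using assms(1) unfolding minkowski_randers_def by blast
  have d: "direction A \<subseteq> direction B" using assms(2) by (rule direction_mono)
  show ?thesis unfolding minkowski_randers_def
    apply (intro conjI exI[of _ N] exI[of _ \<beta>])
    using finsler_on_mono[OF fB assms(2)] finsler_on_mono[OF N assms(2)] lin eq d assms(2)
    by blast+
qed

lemma forward:
  assumes "DIM('a::euclidean_space) \<ge> 3" "minkowski_randers (UNIV :: 'a set) F"
  shows "\<exists>k::nat. 2 \<le> k \<and> k \<le> DIM('a) - 1 \<and>
       graff_dense k {A \<in> graff k. minkowski_randers A F}"
  apply (rule exI[of _ 2])
  using assms MR_mono[OF assms(2)] unfolding graff_dense_def graff_near_def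
  by (auto intro!: bexI)

lemma N_finsler:
  fixes F :: "'a::euclidean_space \<Rightarrow> 'a \<Rightarrow> real"
  assumes fin: "finsler_on UNIV F"
  shows "finsler_on UNIV (\<lambda>_ v. F 0 v)"
proof -
  let ?S = "(UNIV::'a set) \<times> (UNIV - {0::'a})"
  have cont: "continuous_on UNIV (\<lambda>(x, v). F x v)"
    using fin unfolding finsler_on_def direction_UNIV by simp
  obtain f' f'' where c2: "C2_with ?S (\<lambda>(x, v). F x v) f' f''"
    using fin unfolding finsler_on_def C2_on_def direction_UNIV by auto
  have blJ: "bounded_linear (\<lambda>p::'a \<times> 'a. (0::'a, snd p))"
    by (intro bounded_linear_Pair bounded_linear_zero bounded_linear_snd)
  define J :: "('a \<times> 'a) \<Rightarrow>\<^sub>L ('a \<times> 'a)" where "J = Blinfun (\<lambda>p. (0, snd p))"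
  have Jap: "blinfun_apply J p = (0, snd p)" for p
    unfolding J_def using bounded_linear_Blinfun_apply[OF blJ] by simp
  have blC: "bounded_linear (\<lambda>K::('a \<times> 'a) \<Rightarrow>\<^sub>L real. K o\<^sub>L J)"
    by (rule bounded_bilinear.bounded_linear_left[OF bounded_bilinear_blinfun_compose])
  define CR where "CR = Blinfun (\<lambda>K::('a \<times> 'a) \<Rightarrow>\<^sub>L real. K o\<^sub>L J)"
  have CRap: "blinfun_apply CR K = K o\<^sub>L J" for K
    unfolding CR_def using bounded_linear_Blinfun_apply[OF blC] by simp
  have JT: "blinfun_apply J p \<in> ?S" if "p \<in> ?S" for p using that by (auto simp: Jap)
  from C2_with_linear_compose[OF c2 JT CRap]
  have "C2_with ?S (\<lambda>p. (\<lambda>(x, v). F x v) (blinfun_apply J p)) (\<lambda>p. f' (J p) o\<^sub>L J) (\<lambda>p. CR o\<^sub>L f'' (J p) o\<^sub>L J)" .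
  moreover have "(\<lambda>p. (\<lambda>(x, v). F x v) (blinfun_apply J p)) = (\<lambda>(x, v). F 0 v)"
    by (rule ext) (auto simp: Jap)
  ultimately have C2: "C2_on ?S (\<lambda>(x, v). F 0 v)" unfolding C2_on_def by auto
  have "continuous_on UNIV (\<lambda>p::'a \<times> 'a. (\<lambda>(x, v). F x v) (0, snd p))"
    by (rule continuous_on_compose2[OF cont]) (auto intro!: continuous_intros)
  moreover have "(\<lambda>p::'a \<times> 'a. (\<lambda>(x, v). F x v) (0, snd p)) = (\<lambda>(x, v). F 0 v)" by auto
  ultimately have C: "continuous_on UNIV (\<lambda>(x::'a, v). F 0 v)" by metis
  have M: "minkowski_norm UNIV (F 0)" using fin unfolding finsler_on_def direction_UNIV by simp
  show ?thesis unfolding finsler_on_def direction_UNIV using C C2 M by simp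
qed

theorem corollary4p8:
  fixes F :: "'a::euclidean_space \<Rightarrow> 'a \<Rightarrow> real"
  assumes "DIM('a) \<ge> 3"
    and "finsler_on (UNIV :: 'a set) F"
  shows "minkowski_randers (UNIV :: 'a set) F \<longleftrightarrow>
    (\<exists>k::nat. 2 \<le> k \<and> k \<le> DIM('a) - 1 \<and>
       graff_dense k {A \<in> graff k. minkowski_randers A F})"
proof
  assume "minkowski_randers (UNIV :: 'a set) F"
  then show "\<exists>k::nat. 2 \<le> k \<and> k \<le> DIM('a) - 1 \<and>
       graff_dense k {A \<in> graff k. minkowski_randers A F}"
    using forward assms(1) by blast
next
  assume "\<exists>k::nat. 2 \<le> k \<and> k \<le> DIM('a) - 1 \<and>
       graff_dense k {A \<in> graff k. minkowski_randers A F}"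
  then obtain k where k: "2 \<le> k" "k \<le> DIM('a) - 1" and
    dense: "graff_dense k {A \<in> graff k. minkowski_randers A F}" by blast
  have fin: "finsler_on UNIV F" by (rule assms(2))
  have cont: "continuous_on UNIV (\<lambda>(x, v). F x v)"
    using fin unfolding finsler_on_def direction_UNIV by simp
  have all: "\<forall>A\<in>graff k. PLA F A" using dense_PLA[OF cont dense] by blast
  have kD: "k \<le> DIM('a)" using k by simp
  have PL: "F (x + t *\<^sub>R d) (a *\<^sub>R d + b *\<^sub>R u) - F x (a *\<^sub>R d + b *\<^sub>R u)
        = a * (F (x + t *\<^sub>R d) d - F x d) + b * (F (x + t *\<^sub>R d) u - F x u)" for x d u t a b
    by (rule PL_from_planes[OF k(1) kD all])
  have lin: "F y (a *\<^sub>R u + b *\<^sub>R w) - F 0 (a *\<^sub>R u + b *\<^sub>R w)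
        = a * (F y u - F 0 u) + b * (F y w - F 0 w)" for y a b u w
    by (rule deriv_part[OF fin PL])
  show "minkowski_randers (UNIV :: 'a set) F"
    unfolding minkowski_randers_def
  proof (intro conjI exI)
    show "finsler_on UNIV F" by (rule fin)
    show "finsler_on UNIV (\<lambda>_ v. F 0 v)" by (rule N_finsler[OF fin])
    show "\<forall>x\<in>UNIV. \<forall>u\<in>direction UNIV. \<forall>v\<in>direction UNIV. \<forall>a b.
        F x (a *\<^sub>R u + b *\<^sub>R v) - F 0 (a *\<^sub>R u + b *\<^sub>R v) = a * (F x u - F 0 u) + b * (F x v - F 0 v)"
      using lin by blast
    show "\<forall>x\<in>UNIV. \<forall>v\<in>direction UNIV. F x v = F 0 v + (F x v - F 0 v)" by simp
  qed
qed

end
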